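(* Let $p>1$ and $q>1$ be real numbers with $\frac1p+\frac1q=1$, and let $X,Y$ be nonnegative random variables on a common probability space with $\|X\|_p+\|Y\|_p+\|Y\|_q<\infty$. For nonnegative real numbers $A,B,C$ define $$\Delta_{p;A,B,C}(X,Y):=A+\mathbb{E}X^{p-1}Y-(\mathbb{E}X)^{p-1}\,\mathbb{E}Y-\big(B+\mathbb{E}X^p-(\mathbb{E}X)^p\big)^{1/q}\big(C+\mathbb{E}Y^p-(\mathbb{E}Y)^p\big)^{1/p},$$ and let $\Delta_p(X,Y):=\Delta_{p;0,0,0}(X,Y)$. If the nonnegative real numbers $A,B,C$ satisfy $A\le B^{1/q}C^{1/p}$, then $\Delta_{p;A,B,C}(X,Y)\le\Delta_p(X,Y)$.
   Context: $\|X\|_r:=(\mathbb{E}|X|^r)^{1/r}$. Note $\mathbb{E}X^p-(\mathbb{E}X)^p\ge0$ and $\mathbb{E}Y^p-(\mathbb{E}Y)^p\ge0$ by Lyapunov's inequality, so the expression is well defined. *)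

theory Defs
  imports "HOL-Probability.Probability"
begin

definition Delta :: "real \<Rightarrow> real \<Rightarrow> real \<Rightarrow> real \<Rightarrow> real \<Rightarrow> 'a measure \<Rightarrow> ('a \<Rightarrow> real) \<Rightarrow> ('a \<Rightarrow> real) \<Rightarrow> real" where
  "Delta p q A B C M X Y =
     A + (\<integral>\<omega>. X \<omega> powr (p - 1) * Y \<omega> \<partial>M) - (\<integral>\<omega>. X \<omega> \<partial>M) powr (p - 1) * (\<integral>\<omega>. Y \<omega> \<partial>M)
     - (B + (\<integral>\<omega>. X \<omega> powr p \<partial>M) - (\<integral>\<omega>. X \<omega> \<partial>M) powr p) powr (1 / q)
       * (C + (\<integral>\<omega>. Y \<omega> powr p \<partial>M) - (\<integral>\<omega>. Y \<omega> \<partial>M) powr p) powr (1 / p)"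

end

theory Submission
  imports Defs
begin

lemma young0:
  fixes a b al be :: real
  assumes "0 \<le> al" "0 \<le> be" "al + be = 1" "a \<ge> 0" "b \<ge> 0"
  shows "a powr al * b powr be \<le> al*a + be*b"
proof (cases "a = 0 \<or> b = 0")
  case True
  then show ?thesis using assms by auto
next
  case False
  then show ?thesis using Youngs_inequality_0[of al be a b] assms by auto
qed

lemma disc_holder:
  fixes a b c d p q :: real
  assumes "p > 1" "q > 1" "1/p + 1/q = 1" "a \<ge> 0" "b \<ge> 0" "c \<ge> 0" "d \<ge> 0"
  shows "a powr (1/q) * b powr (1/p) + c powr (1/q) * d powr (1/p)
         \<le> (a+c) powr (1/q) * (b+d) powr (1/p)"
proof (cases "a + c = 0 \<or> b + d = 0")
  case True
  then have "(a = 0 \<and> c = 0) \<or> (b = 0 \<and> d = 0)" using assms by linarith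
  then show ?thesis
  proof
    assume "a = 0 \<and> c = 0" then show ?thesis by simp
  next
    assume "b = 0 \<and> d = 0" then show ?thesis using assms by simp
  qed
next
  case False
  define S where "S = a + c"
  define T where "T = b + d"
  have S: "S > 0" and T: "T > 0" using False assms unfolding S_def T_def by auto
  have key: "x powr (1/q) * y powr (1/p) \<le> S powr (1/q) * T powr (1/p) * ((1/q) * (x/S) + (1/p) * (y/T))"
    if "x \<ge> 0" "y \<ge> 0" for x y
  proof -
    have "(x/S) powr (1/q) * (y/T) powr (1/p) \<le> (1/q) * (x/S) + (1/p) * (y/T)"
      using young0[of "1/q" "1/p" "x/S" "y/T"] assms that S T by auto
    moreover have "x powr (1/q) * y powr (1/p) = S powr (1/q) * T powr (1/p) * ((x/S) powr (1/q) * (y/T) powr (1/p))"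
      using S T that by (simp add: powr_divide)
    moreover have "S powr (1/q) * T powr (1/p) \<ge> 0" by simp
    ultimately show ?thesis by (metis mult_left_mono)
  qed
  have "a powr (1/q) * b powr (1/p) + c powr (1/q) * d powr (1/p)
     \<le> S powr (1/q) * T powr (1/p) * ((1/q) * (a/S) + (1/p) * (b/T))
       + S powr (1/q) * T powr (1/p) * ((1/q) * (c/S) + (1/p) * (d/T))"
    using key[of a b] key[of c d] assms by linarith
  also have "\<dots> = S powr (1/q) * T powr (1/p) * ((1/q) * ((a+c)/S) + (1/p) * ((b+d)/T))"
    by (simp add: algebra_simps add_divide_distrib)
  also have "\<dots> = S powr (1/q) * T powr (1/p)"
    using S T assms(3) unfolding S_def T_def by (simp add: add.commute)
  finally show ?thesis unfolding S_def T_def .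
qed

lemma pow_jensen:
  fixes M :: "'a measure" and X :: "'a \<Rightarrow> real" and p q :: real
  assumes "prob_space M" "p > 1" "q > 1" "1/p + 1/q = 1"
    and "X \<in> borel_measurable M" and nn: "\<forall>\<omega>\<in>space M. X \<omega> \<ge> 0"
    and ip: "integrable M (\<lambda>\<omega>. X \<omega> powr p)"
  shows "(\<integral>\<omega>. X \<omega> \<partial>M) powr p \<le> (\<integral>\<omega>. X \<omega> powr p \<partial>M)"
proof (cases "integrable M X")
  case False
  then show ?thesis by (simp add: not_integrable_integral_eq)
next
  case True
  interpret prob_space M by fact
  define E where "E = (\<integral>\<omega>. X \<omega> powr p \<partial>M)"
  have E0: "E \<ge> 0" unfolding E_def by (intro integral_nonneg_AE) auto
  have I0: "(\<integral>\<omega>. X \<omega> \<partial>M) \<ge> 0" using nn by (intro integral_nonneg_AE) auto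
  have bound: "(\<integral>\<omega>. X \<omega> \<partial>M) \<le> E / (p * m powr (p-1)) + m / q" if m: "m > 0" for m
  proof -
    have pw: "X \<omega> \<le> X \<omega> powr p / (p * m powr (p-1)) + m / q" if "\<omega> \<in> space M" for \<omega>
    proof -
      have "(X \<omega> / m) * 1 \<le> (X \<omega> / m) powr p / p + 1 powr q / q"
        using Youngs_inequality[of p q "X \<omega> / m" 1] assms nn that m by auto
      hence "m * (X \<omega> / m) \<le> m * ((X \<omega> / m) powr p / p + 1 / q)"
        using m by (intro mult_left_mono) simp_all
      also have "(X \<omega> / m) powr p = X \<omega> powr p / (m * m powr (p-1))"
        using m nn that by (simp add: powr_divide powr_diff)
      finally show ?thesis using m by (simp add: field_simps)
    qed
    have "(\<integral>\<omega>. X \<omega> \<partial>M) \<le> (\<integral>\<omega>. X \<omega> powr p / (p * m powr (p-1)) + m / q \<partial>M)"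
      using pw True ip by (intro integral_mono) auto
    also have "\<dots> = E / (p * m powr (p-1)) + m / q"
      unfolding E_def using ip by (simp add: prob_space)
    finally show ?thesis .
  qed
  show ?thesis
  proof (cases "E = 0")
    case True
    have "(\<integral>\<omega>. X \<omega> \<partial>M) \<le> 0"
    proof (rule field_le_epsilon)
      fix e :: real assume e: "e > 0"
      have "(\<integral>\<omega>. X \<omega> \<partial>M) \<le> (q*e) / q" using bound[of "q*e"] True e assms by simp
      thus "(\<integral>\<omega>. X \<omega> \<partial>M) \<le> 0 + e" using assms by simp
    qed
    hence "(\<integral>\<omega>. X \<omega> \<partial>M) = 0" using I0 by simp
    then show ?thesis using E0 unfolding E_def by simp
  next
    case False
    define m where "m = E powr (1/p)"
    have m: "m > 0" using False E0 unfolding m_def by simp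
    have "E / (p * m powr (p-1)) = m / p"
    proof -
      have "m powr (p-1) * m = E powr ((p-1)/p) * E powr (1/p)"
        unfolding m_def using E0 by (simp add: powr_powr)
      also have "\<dots> = E powr ((p-1)/p + 1/p)" using False E0 by (simp add: powr_add)
      also have "(p-1)/p + 1/p = 1" using assms by (simp add: field_simps)
      finally have Em: "E = m powr (p-1) * m" using E0 by simp
      have P: "m powr (p-1) > 0" using m by simp
      have "E / (p * m powr (p-1)) = (m powr (p-1) * m) / (p * m powr (p-1))" using Em by simp
      also have "\<dots> = m / p" using P by simp
      finally show ?thesis .
    qed
    hence "(\<integral>\<omega>. X \<omega> \<partial>M) \<le> m/p + m/q" using bound[OF m] by simp
    also have "\<dots> = m" using assms by (metis add_divide_distrib distrib_left mult.right_neutral times_divide_eq_right)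
    finally have "(\<integral>\<omega>. X \<omega> \<partial>M) \<le> m" .
    hence "(\<integral>\<omega>. X \<omega> \<partial>M) powr p \<le> m powr p" using I0 assms by (intro powr_mono2) auto
    also have "m powr p = E" unfolding m_def using E0 assms by (simp add: powr_powr)
    finally show ?thesis unfolding E_def .
  qed
qed

theorem lemma1:
  fixes M :: "'a measure" and X Y :: "'a \<Rightarrow> real" and p q A B C :: real
  assumes "prob_space M"
    and "p > 1" and "q > 1" and "1 / p + 1 / q = 1"
    and "X \<in> borel_measurable M" and "Y \<in> borel_measurable M"
    and "\<forall>\<omega>\<in>space M. X \<omega> \<ge> 0" and "\<forall>\<omega>\<in>space M. Y \<omega> \<ge> 0"
    and "integrable M (\<lambda>\<omega>. X \<omega> powr p)"
    and "integrable M (\<lambda>\<omega>. Y \<omega> powr p)"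
    and "integrable M (\<lambda>\<omega>. Y \<omega> powr q)"
    and "A \<ge> 0" and "B \<ge> 0" and "C \<ge> 0"
    and "A \<le> B powr (1 / q) * C powr (1 / p)"
  shows "Delta p q A B C M X Y \<le> Delta p q 0 0 0 M X Y"
proof -
  define u where "u = (\<integral>\<omega>. X \<omega> powr p \<partial>M) - (\<integral>\<omega>. X \<omega> \<partial>M) powr p"
  define v where "v = (\<integral>\<omega>. Y \<omega> powr p \<partial>M) - (\<integral>\<omega>. Y \<omega> \<partial>M) powr p"
  have u: "u \<ge> 0" unfolding u_def using pow_jensen[of M p q X] assms by simp
  have v: "v \<ge> 0" unfolding v_def using pow_jensen[of M p q Y] assms by simp
  have h: "u powr (1/q) * v powr (1/p) + B powr (1/q) * C powr (1/p) \<le> (u+B) powr (1/q) * (v+C) powr (1/p)"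
    using disc_holder[of p q u v B C] assms u v by simp
  have e1: "B + (\<integral>\<omega>. X \<omega> powr p \<partial>M) - (\<integral>\<omega>. X \<omega> \<partial>M) powr p = u + B" unfolding u_def by simp
  have e2: "C + (\<integral>\<omega>. Y \<omega> powr p \<partial>M) - (\<integral>\<omega>. Y \<omega> \<partial>M) powr p = v + C" unfolding v_def by simp
  have e3: "0 + (\<integral>\<omega>. X \<omega> powr p \<partial>M) - (\<integral>\<omega>. X \<omega> \<partial>M) powr p = u" unfolding u_def by simp
  have e4: "0 + (\<integral>\<omega>. Y \<omega> powr p \<partial>M) - (\<integral>\<omega>. Y \<omega> \<partial>M) powr p = v" unfolding v_def by simp
  show ?thesis unfolding Delta_def e1 e2 e3 e4 using h assms(15) by linarith
qed

end
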